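(* Let ${\bf f}=(f_1,\dots,f_n)$ be a complete intersection (of $n$ quadrics in $n$ variables) with $k\le 2^n$ real points. Then (a) $\mathcal{R}^{lin}_{\bf f}$ consists of $k$ spectrahedral cones, each linearly isomorphic to the master spectrahedron $\mathrm{S}^{lin}_{\bf f}$; and (b) $\mathcal{R}^{ed}_{\bf f}$ consists of $k$ full-dimensional spectrahedra, each (affinely) isomorphic to the master spectrahedron $\mathrm{S}^{ed}_{\bf f}$.
   Context: Write $f_i(x)=x^TA_ix+2a_i^Tx+\alpha_i$ with $A_i$ real symmetric $n\times n$, $a_i\in\mathbb{R}^n$, $\alpha_i\in\mathbb{R}$; $V_{\bf f}\subset\mathbb{R}^n$ is the real zero set. Master spectrahedra: $\mathrm{S}^{lin}_{\bf f}=\{\lambda\in\mathbb{R}^n:\sum_i\lambda_iA_i\prec0\}$, $\mathrm{S}^{ed}_{\bf f}=\{\lambda\in\mathbb{R}^n:\sum_i\lambda_iA_i\prec I_n\}$. SDP-exact regions: $\mathcal{R}^{lin}_{\bf f}$ is the set of $u\in\mathbb{R}^n$ such that there exist $x\in V_{\bf f}$ and $\lambda\in\mathrm{S}^{lin}_{\bf f}$ with $u=\sum_i\lambda_i(a_i+A_ix)$; $\mathcal{R}^{ed}_{\bf f}$ is the set of $u\in\mathbb{R}^n$ such that there exist $x\in V_{\bf f}$ and $\lambda\in\mathrm{S}^{ed}_{\bf f}$ with $u=x-\sum_i\lambda_i(a_i+A_ix)$. (These are the SDP-exact regions, i.e. cost parameters for which the Shor relaxation of minimizing $u^Tx$, resp.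 $\|x-u\|^2$, over $V_{\bf f}$ is exact with strict complementarity.) *)

theory Defs
  imports "HOL-Analysis.Analysis"
begin

text \<open>Quadrics f_i(x) = x^T A_i x + 2 a_i^T x + alpha_i on R^n, n = CARD('n);
  the constraints are indexed by the same finite type 'n (n quadrics in n variables).\<close>

definition quad :: "real^'n^'n \<Rightarrow> real^'n \<Rightarrow> real \<Rightarrow> real^'n \<Rightarrow> real" where
  "quad A a \<alpha> x = x \<bullet> (A *v x) + 2 * (a \<bullet> x) + \<alpha>"

definition realV :: "('i \<Rightarrow> real^'n^'n) \<Rightarrow> ('i \<Rightarrow> real^'n) \<Rightarrow> ('i \<Rightarrow> real) \<Rightarrow> (real^'n) set" where
  "realV A a \<alpha> = {x. \<forall>i. quad (A i) (a i) (\<alpha> i) x = 0}"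

definition quadC :: "real^'n^'n \<Rightarrow> real^'n \<Rightarrow> real \<Rightarrow> complex^'n \<Rightarrow> complex" where
  "quadC A a \<alpha> z = (\<Sum>j\<in>UNIV. \<Sum>k\<in>UNIV. complex_of_real (A$j$k) * z$j * z$k)
      + 2 * (\<Sum>j\<in>UNIV. complex_of_real (a$j) * z$j) + complex_of_real \<alpha>"

definition complexV :: "('n \<Rightarrow> real^'n^'n) \<Rightarrow> ('n \<Rightarrow> real^'n) \<Rightarrow> ('n \<Rightarrow> real) \<Rightarrow> (complex^'n) set" where
  "complexV A a \<alpha> = {z. \<forall>i. quadC (A i) (a i) (\<alpha> i) z = 0}"

text \<open>Half of the Jacobian of f at a complex point: row i is (A_i z + a_i)^T.\<close>
definition jacC :: "('n \<Rightarrow> real^'n^'n) \<Rightarrow> ('n \<Rightarrow> real^'n) \<Rightarrow> complex^'n \<Rightarrow> complex^'n^'n" where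
  "jacC A a z = (\<chi> i j. (\<Sum>k\<in>UNIV. complex_of_real (A i $j$k) * z$k) + complex_of_real (a i $ j))"

text \<open>Complete intersection: the ideal (f_1,..,f_n) is radical of codimension n, i.e.
  the complex variety is zero-dimensional (finite) and reduced (the Jacobian is
  nonsingular at every complex zero).\<close>
definition complete_intersection :: "('n \<Rightarrow> real^'n^'n) \<Rightarrow> ('n \<Rightarrow> real^'n) \<Rightarrow> ('n \<Rightarrow> real) \<Rightarrow> bool" where
  "complete_intersection A a \<alpha> \<longleftrightarrow>
     finite (complexV A a \<alpha>) \<and> (\<forall>z\<in>complexV A a \<alpha>. det (jacC A a z) \<noteq> 0)"

definition neg_definite :: "real^'n^'n \<Rightarrow> bool" where
  "neg_definite M \<longleftrightarrow> (\<forall>v. v \<noteq> 0 \<longrightarrow> v \<bullet> (M *v v) < 0)"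

definition lin_comb :: "real^'i \<Rightarrow> ('i \<Rightarrow> real^'n^'n) \<Rightarrow> real^'n^'n" where
  "lin_comb lam A = (\<Sum>i\<in>UNIV. lam$i *\<^sub>R A i)"

definition Slin :: "('n \<Rightarrow> real^'n^'n) \<Rightarrow> (real^'n) set" where
  "Slin A = {lam. neg_definite (lin_comb lam A)}"

definition Sed :: "('n \<Rightarrow> real^'n^'n) \<Rightarrow> (real^'n) set" where
  "Sed A = {lam. neg_definite (lin_comb lam A - mat 1)}"

definition Rlin :: "('n \<Rightarrow> real^'n^'n) \<Rightarrow> ('n \<Rightarrow> real^'n) \<Rightarrow> ('n \<Rightarrow> real) \<Rightarrow> (real^'n) set" where
  "Rlin A a \<alpha> = {u. \<exists>x\<in>realV A a \<alpha>. \<exists>lam\<in>Slin A.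
      u = (\<Sum>i\<in>UNIV. lam$i *\<^sub>R (a i + A i *v x))}"

definition Red :: "('n \<Rightarrow> real^'n^'n) \<Rightarrow> ('n \<Rightarrow> real^'n) \<Rightarrow> ('n \<Rightarrow> real) \<Rightarrow> (real^'n) set" where
  "Red A a \<alpha> = {u. \<exists>x\<in>realV A a \<alpha>. \<exists>lam\<in>Sed A.
      u = x - (\<Sum>i\<in>UNIV. lam$i *\<^sub>R (a i + A i *v x))}"

definition spectrahedral_cone :: "(real^'n) set \<Rightarrow> bool" where
  "spectrahedral_cone C \<longleftrightarrow> (\<exists>(m::nat) (B :: 'n \<Rightarrow> nat \<Rightarrow> nat \<Rightarrow> real).
     (\<forall>j r s. B j r s = B j s r) \<and>
     C = {u. \<forall>v::nat \<Rightarrow> real. (\<exists>r<m. v r \<noteq> 0) \<longrightarrow>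
            (\<Sum>r<m. \<Sum>s<m. v r * (\<Sum>j\<in>UNIV. u$j * B j r s) * v s) < 0})"

definition spectrahedron :: "(real^'n) set \<Rightarrow> bool" where
  "spectrahedron S \<longleftrightarrow> (\<exists>(m::nat) (B0 :: nat \<Rightarrow> nat \<Rightarrow> real) (B :: 'n \<Rightarrow> nat \<Rightarrow> nat \<Rightarrow> real).
     (\<forall>r s. B0 r s = B0 s r) \<and> (\<forall>j r s. B j r s = B j s r) \<and>
     S = {u. \<forall>v::nat \<Rightarrow> real. (\<exists>r<m. v r \<noteq> 0) \<longrightarrow>
            (\<Sum>r<m. \<Sum>s<m. v r * (B0 r s + (\<Sum>j\<in>UNIV. u$j * B j r s)) * v s) > 0})"

end

theory Submission
  imports Defs
begin

lemma lin_comb_comp: "lin_comb lam A $ p $ q = (\<Sum>i\<in>UNIV. lam$i * A i $ p $ q)"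
  by (simp add: lin_comb_def sum_component)

lemma lin_comb_add: "lin_comb (c + d) A = lin_comb c A + lin_comb d A"
  by (simp add: vec_eq_iff lin_comb_comp sum.distrib algebra_simps)

lemma lin_comb_neg: "lin_comb (- c) A = - lin_comb c A"
  by (simp add: vec_eq_iff lin_comb_comp sum_negf)

lemma lin_comb_scale: "lin_comb (r *\<^sub>R c) A = r *\<^sub>R lin_comb c A"
  by (simp add: vec_eq_iff lin_comb_comp sum_distrib_left algebra_simps)

lemma linear_lin_comb: "linear (\<lambda>lam. lin_comb lam A)"
  by (rule linearI) (simp_all add: lin_comb_add lin_comb_scale)

lemma lin_comb_sym: assumes "\<forall>i. transpose (A i) = A i"
  shows "transpose (lin_comb lam A) = lin_comb lam A"
proof -
  have "A i $ q $ p = A i $ p $ q" for i p q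
    using assms by (metis transpose_def vec_lambda_beta)
  then show ?thesis by (simp add: vec_eq_iff transpose_def lin_comb_comp)
qed

lemma lin_comb_mv: "lin_comb lam A *v v = (\<Sum>i\<in>UNIV. lam$i *\<^sub>R (A i *v v))"
  apply (simp add: vec_eq_iff lin_comb_comp matrix_vector_mult_def sum_component sum_distrib_left sum_distrib_right mult.assoc)
  apply (rule allI, rule sum.swap)
  done

lemma linear_expand:
  fixes T :: "real^'n \<Rightarrow> 'b::real_vector"
  assumes "linear T"
  shows "T u = (\<Sum>j\<in>UNIV. u$j *\<^sub>R T (axis j 1))"
proof -
  have "u = (\<Sum>j\<in>UNIV. u$j *\<^sub>R axis j 1)"
    using basis_expansion[of u] by (simp add: scalar_mult_eq_scaleR)
  then have "T u = T (\<Sum>j\<in>UNIV. u$j *\<^sub>R axis j 1)" by simp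
  also have "\<dots> = (\<Sum>j\<in>UNIV. u$j *\<^sub>R T (axis j 1))"
    using assms by (simp add: linear_sum linear_scale)
  finally show ?thesis .
qed

lemma linear_expand_comp:
  fixes T :: "real^'n \<Rightarrow> real^'m^'k"
  assumes "linear T"
  shows "T u $ p $ q = (\<Sum>j\<in>UNIV. u$j * T (axis j 1) $ p $ q)"
  by (subst linear_expand[OF assms]) (simp add: sum_component)

lemma qf_expand: "x \<bullet> (P *v x) = (\<Sum>p\<in>UNIV. \<Sum>q\<in>UNIV. x$p * P$p$q * x$q)"
  by (simp add: inner_vec_def matrix_vector_mult_def sum_distrib_left mult.assoc)

lemma qf_reindex:
  fixes P :: "real^'n^'n" and m :: nat
  assumes h: "bij_betw h {..<m} (UNIV::'n set)"
  shows "(\<Sum>r<m. \<Sum>s<m. v r * P$h r$h s * v s) = (\<chi> i. v (inv_into {..<m} h i)) \<bullet> (P *v (\<chi> i. v (inv_into {..<m} h i)))"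
proof -
  let ?w = "(\<chi> i. v (inv_into {..<m} h i))"
  have hi: "inv_into {..<m} h (h r) = r" if "r < m" for r
    using bij_betw_inv_into_left[OF h] that by simp
  have w: "?w $ h r = v r" if "r < m" for r
    using hi that by simp
  have "?w \<bullet> (P *v ?w) = (\<Sum>p\<in>UNIV. \<Sum>q\<in>UNIV. ?w$p * P$p$q * ?w$q)" by (rule qf_expand)
  also have "\<dots> = (\<Sum>r<m. \<Sum>q\<in>UNIV. ?w$h r * P$h r$q * ?w$q)"
    by (rule sum.reindex_bij_betw[OF h, symmetric])
  also have "\<dots> = (\<Sum>r<m. \<Sum>s<m. ?w$h r * P$h r$h s * ?w$h s)"
    by (rule sum.cong[OF refl], rule sum.reindex_bij_betw[OF h, symmetric])
  also have "\<dots> = (\<Sum>r<m. \<Sum>s<m. v r * P$h r$h s * v s)"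
    by (intro sum.cong refl) (simp add: hi)
  finally show ?thesis by simp
qed

lemma qf_iff:
  fixes P :: "real^'n^'n" and m :: nat
  assumes h: "bij_betw h {..<m} (UNIV::'n set)"
  shows "(\<forall>x. x \<noteq> 0 \<longrightarrow> R (x \<bullet> (P *v x))) \<longleftrightarrow>
         (\<forall>v. (\<exists>r<m. v r \<noteq> 0) \<longrightarrow> R (\<Sum>r<m. \<Sum>s<m. v r * P$h r$h s * v s))"
proof safe
  fix v :: "nat \<Rightarrow> real" and r :: nat assume H: "\<forall>x. x \<noteq> 0 \<longrightarrow> R (x \<bullet> (P *v x))" and r: "r < m" "v r \<noteq> 0"
  let ?w = "(\<chi> i. v (inv_into {..<m} h i))"
  have "?w $ h r = v r" using bij_betw_inv_into_left[OF h] r by simp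
  then have "?w \<noteq> 0" using r by (metis zero_index)
  then show "R (\<Sum>r<m. \<Sum>s<m. v r * P$h r$h s * v s)"
    using H qf_reindex[OF h, of v P] by simp
next
  fix x :: "real^'n" assume H: "\<forall>v. (\<exists>r<m. v r \<noteq> 0) \<longrightarrow> R (\<Sum>r<m. \<Sum>s<m. v r * P$h r$h s * v s)"
    and x: "x \<noteq> 0"
  let ?v = "\<lambda>r. x $ h r"
  have e: "(\<chi> i. ?v (inv_into {..<m} h i)) = x"
    using h by (simp add: vec_eq_iff bij_betw_inv_into_right)
  obtain i where i: "x $ i \<noteq> 0" using x by (auto simp: vec_eq_iff)
  have "inv_into {..<m} h i \<in> {..<m}"
    using h by (metis bij_betw_def inv_into_into UNIV_I)
  moreover have "?v (inv_into {..<m} h i) \<noteq> 0"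
    using h i by (simp add: bij_betw_inv_into_right)
  ultimately have "inv_into {..<m} h i < m" "?v (inv_into {..<m} h i) \<noteq> 0" by auto
  then have "R (\<Sum>r<m. \<Sum>s<m. ?v r * P$h r$h s * ?v s)" by (intro H[rule_format]) blast
  then show "R (x \<bullet> (P *v x))" using qf_reindex[OF h, of ?v P] e by simp
qed


lemma get_h: obtains h :: "nat \<Rightarrow> 'n::finite" where "bij_betw h {..<CARD('n)} UNIV"
  using ex_bij_betw_nat_finite[of "UNIV::'n set"] by (auto simp: atLeast0LessThan)

lemma sym_comp: "transpose M = M \<Longrightarrow> M $ p $ q = M $ q $ p"
  by (metis transpose_def vec_lambda_beta)

lemma cone_rep:
  fixes T :: "real^'n::finite \<Rightarrow> real^'n^'n"
  assumes lin: "linear T" and sym: "\<forall>u. transpose (T u) = T u"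
  shows "spectrahedral_cone {u. neg_definite (T u)}"
proof -
  obtain h :: "nat \<Rightarrow> 'n" where h: "bij_betw h {..<CARD('n)} UNIV" by (rule get_h)
  define B where "B j r s = T (axis j 1) $ h r $ h s" for j r s
  have Bsym: "\<forall>j r s. B j r s = B j s r"
    using sym by (simp add: B_def sym_comp)
  have key: "(\<Sum>j\<in>UNIV. u$j * B j r s) = T u $ h r $ h s" for u r s
    by (simp add: B_def linear_expand_comp[OF lin, of u])
  have nd: "neg_definite (T u) \<longleftrightarrow> (\<forall>v::nat \<Rightarrow> real. (\<exists>r<CARD('n). v r \<noteq> 0) \<longrightarrow>
            (\<Sum>r<CARD('n). \<Sum>s<CARD('n). v r * T u $ h r $ h s * v s) < 0)" for u
    unfolding neg_definite_def by (rule qf_iff[OF h, where R = "\<lambda>t. t < 0"])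
  have eq: "{u. neg_definite (T u)} = {u. \<forall>v::nat \<Rightarrow> real. (\<exists>r<CARD('n). v r \<noteq> 0) \<longrightarrow>
            (\<Sum>r<CARD('n). \<Sum>s<CARD('n). v r * (\<Sum>j\<in>UNIV. u$j * B j r s) * v s) < 0}"
    unfolding key nd ..
  show ?thesis unfolding spectrahedral_cone_def
    by (intro exI[of _ "CARD('n)"] exI[of _ B] conjI Bsym eq)
qed

lemma spec_rep:
  fixes T :: "real^'n::finite \<Rightarrow> real^'n^'n" and P0 :: "real^'n^'n"
  assumes lin: "linear T" and sym: "\<forall>u. transpose (T u) = T u" and sym0: "transpose P0 = P0"
  shows "spectrahedron {u. \<forall>x. x \<noteq> 0 \<longrightarrow> x \<bullet> ((P0 + T u) *v x) > 0}"
proof -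
  obtain h :: "nat \<Rightarrow> 'n" where h: "bij_betw h {..<CARD('n)} UNIV" by (rule get_h)
  define B where "B j r s = T (axis j 1) $ h r $ h s" for j r s
  define B0 where "B0 r s = P0 $ h r $ h s" for r s
  have Bsym: "\<forall>j r s. B j r s = B j s r"
    using sym by (simp add: B_def sym_comp)
  have B0sym: "\<forall>r s. B0 r s = B0 s r"
    using sym0 by (simp add: B0_def sym_comp)
  have key: "B0 r s + (\<Sum>j\<in>UNIV. u$j * B j r s) = (P0 + T u) $ h r $ h s" for u r s
    by (simp add: B_def B0_def linear_expand_comp[OF lin, of u])
  have nd: "(\<forall>x. x \<noteq> 0 \<longrightarrow> x \<bullet> ((P0 + T u) *v x) > 0) \<longleftrightarrow> (\<forall>v::nat \<Rightarrow> real. (\<exists>r<CARD('n). v r \<noteq> 0) \<longrightarrow>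
            (\<Sum>r<CARD('n). \<Sum>s<CARD('n). v r * (P0 + T u) $ h r $ h s * v s) > 0)" for u
    by (rule qf_iff[OF h, where R = "\<lambda>t. t > 0"])
  have eq: "{u. \<forall>x. x \<noteq> 0 \<longrightarrow> x \<bullet> ((P0 + T u) *v x) > 0} = {u. \<forall>v::nat \<Rightarrow> real. (\<exists>r<CARD('n). v r \<noteq> 0) \<longrightarrow>
            (\<Sum>r<CARD('n). \<Sum>s<CARD('n). v r * (B0 r s + (\<Sum>j\<in>UNIV. u$j * B j r s)) * v s) > 0}"
    unfolding key nd ..
  show ?thesis unfolding spectrahedron_def
    by (intro exI[of _ "CARD('n)"] exI[of _ B0] exI[of _ B] conjI Bsym B0sym eq)
qed


definition Jr :: "('n \<Rightarrow> real^'n^'n) \<Rightarrow> ('n \<Rightarrow> real^'n) \<Rightarrow> real^'n \<Rightarrow> real^'n^'n" where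
  "Jr A a x = (\<chi> i j. (A i *v x)$j + a i $ j)"

lemma Jr_mv: "transpose (Jr A a x) *v lam = (\<Sum>i\<in>UNIV. lam$i *\<^sub>R (a i + A i *v x))"
  by (simp add: vec_eq_iff Jr_def transpose_def matrix_vector_mult_def sum_component algebra_simps)

lemma neg_mv: "(- T) *v w = - (T *v (w::real^'n))"
  by (simp add: vec_eq_iff matrix_vector_mult_def sum_negf)

lemma sym_inner: "transpose M = M \<Longrightarrow> x \<bullet> (M *v y) = y \<bullet> (M *v (x::real^'n))"
  by (metis dot_lmul_matrix transpose_matrix_vector inner_commute)

lemma quad_diff: assumes "transpose M = M"
  shows "quad M b c z - quad M b c x = (z-x) \<bullet> (M *v (z-x)) + 2 * ((M *v x + b) \<bullet> (z-x))"
proof -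
  have e1: "(M *v x) \<bullet> x = x \<bullet> (M *v x)" "(M *v x) \<bullet> z = z \<bullet> (M *v x)" "b \<bullet> x = x \<bullet> b" "b \<bullet> z = z \<bullet> b"
    by (simp_all add: inner_commute)
  show ?thesis
    using sym_inner[OF assms, of x z] e1
    by (simp add: quad_def matrix_vector_mult_diff_distrib inner_diff_left inner_diff_right inner_add_left algebra_simps)
qed

lemma key_identity:
  assumes sym: "\<forall>i. transpose (A i) = A i" and x: "x \<in> realV A a \<alpha>" and z: "z \<in> realV A a \<alpha>"
  shows "(z-x) \<bullet> (lin_comb lam A *v (z-x)) + 2 * ((\<Sum>i\<in>UNIV. lam$i *\<^sub>R (a i + A i *v x)) \<bullet> (z-x)) = 0"
proof -
  have "0 = (\<Sum>i\<in>UNIV. lam$i * (quad (A i) (a i) (\<alpha> i) z - quad (A i) (a i) (\<alpha> i) x))"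
    using x z by (simp add: realV_def)
  also have "\<dots> = (\<Sum>i\<in>UNIV. lam$i * ((z-x) \<bullet> (A i *v (z-x)) + 2 * ((A i *v x + a i) \<bullet> (z-x))))"
    using sym by (simp add: quad_diff)
  also have "\<dots> = (\<Sum>i\<in>UNIV. lam$i * ((z-x) \<bullet> (A i *v (z-x)))) + 2 * (\<Sum>i\<in>UNIV. lam$i * ((A i *v x + a i) \<bullet> (z-x)))"
    by (simp only: sum_distrib_left sum.distrib[symmetric]) (rule sum.cong, simp_all add: algebra_simps)
  also have "(\<Sum>i\<in>UNIV. lam$i * ((z-x) \<bullet> (A i *v (z-x)))) = (z-x) \<bullet> (lin_comb lam A *v (z-x))"
    by (simp add: lin_comb_mv inner_sum_right)
  also have "(\<Sum>i\<in>UNIV. lam$i * ((A i *v x + a i) \<bullet> (z-x))) = (\<Sum>i\<in>UNIV. lam$i *\<^sub>R (a i + A i *v x)) \<bullet> (z-x)"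
    by (simp add: inner_sum_left add.commute)
  finally show ?thesis by simp
qed

lemma lin_strict:
  assumes sym: "\<forall>i. transpose (A i) = A i" and x: "x \<in> realV A a \<alpha>" and z: "z \<in> realV A a \<alpha>"
    and zx: "z \<noteq> x" and lam: "lam \<in> Slin A"
  shows "(\<Sum>i\<in>UNIV. lam$i *\<^sub>R (a i + A i *v x)) \<bullet> x < (\<Sum>i\<in>UNIV. lam$i *\<^sub>R (a i + A i *v x)) \<bullet> z"
proof -
  have "(z-x) \<bullet> (lin_comb lam A *v (z-x)) < 0"
    using lam zx by (simp add: Slin_def neg_definite_def)
  with key_identity[OF sym x z, of lam] show ?thesis by (simp add: inner_diff_right)
qed

lemma ed_strict:
  assumes sym: "\<forall>i. transpose (A i) = A i" and x: "x \<in> realV A a \<alpha>" and z: "z \<in> realV A a \<alpha>"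
    and zx: "z \<noteq> x" and lam: "lam \<in> Sed A"
    and u: "u = x - (\<Sum>i\<in>UNIV. lam$i *\<^sub>R (a i + A i *v x))"
  shows "(x - u) \<bullet> (x - u) < (z - u) \<bullet> (z - u)"
proof -
  define w where "w = (\<Sum>i\<in>UNIV. lam$i *\<^sub>R (a i + A i *v x))"
  have "(z-x) \<bullet> ((lin_comb lam A - mat 1) *v (z-x)) < 0"
    using lam zx by (simp add: Sed_def neg_definite_def)
  then have a1: "(z-x) \<bullet> (lin_comb lam A *v (z-x)) < (z-x) \<bullet> (z-x)"
    by (simp add: matrix_vector_mult_diff_rdistrib inner_diff_right)
  have a2: "(z-x) \<bullet> (lin_comb lam A *v (z-x)) + 2 * (w \<bullet> (z-x)) = 0"
    using key_identity[OF sym x z, of lam] by (simp add: w_def)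
  define d where "d = z - x"
  have e: "z - u = d + w" "x - u = w" using u by (simp_all add: w_def d_def)
  have "(d + w) \<bullet> (d + w) = d \<bullet> d + 2 * (w \<bullet> d) + w \<bullet> w"
    by (simp add: inner_add_left inner_add_right inner_commute[of d w])
  then show ?thesis using a1 a2 unfolding e by (simp add: d_def)
qed


lemma matrix_inv_both: "invertible T \<Longrightarrow> T ** matrix_inv T = mat 1 \<and> matrix_inv T ** T = mat 1"
  unfolding invertible_def matrix_inv_def by (rule someI_ex)

lemma image_inv: assumes "T ** B = mat 1" "B ** T = mat 1"
  shows "(\<lambda>w. T *v w) ` S = {u. B *v u \<in> S}"
proof safe
  fix w assume "w \<in> S" then show "B *v (T *v w) \<in> S" by (simp add: matrix_vector_mul_assoc assms)
next
  fix u assume "B *v u \<in> S"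
  moreover have "u = T *v (B *v u)" by (simp add: matrix_vector_mul_assoc assms)
  ultimately show "u \<in> (\<lambda>w. T *v w) ` S" by blast
qed

lemma bij_mv: assumes "T ** B = mat 1" "B ** T = mat 1"
  shows "bij (\<lambda>w. T *v (w::real^'n))"
  by (rule o_bij[of "\<lambda>u. B *v u"]) (simp_all add: fun_eq_iff matrix_vector_mul_assoc assms)

lemma det_of_real: "det (\<chi> i j. complex_of_real (M$i$j)) = complex_of_real (det (M::real^'n^'n))"
  by (simp add: det_def of_real_sum of_real_mult of_real_prod)

lemma quad_expand: "quad M b c x = (\<Sum>j\<in>UNIV. \<Sum>k\<in>UNIV. M$j$k * x$j * x$k) + 2 * (\<Sum>j\<in>UNIV. b$j * x$j) + c"
  by (simp add: quad_def inner_vec_def matrix_vector_mult_def sum_distrib_left algebra_simps)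

lemma det_Jr:
  assumes ci: "complete_intersection A a \<alpha>" and x: "x \<in> realV A a \<alpha>"
  shows "det (Jr A a x) \<noteq> 0"
proof -
  define z where "z = (\<chi> j. complex_of_real (x$j))"
  have "quadC (A i) (a i) (\<alpha> i) z = complex_of_real (quad (A i) (a i) (\<alpha> i) x)" for i
    by (simp add: quadC_def quad_expand z_def of_real_sum of_real_mult)
  then have "z \<in> complexV A a \<alpha>" using x by (simp add: complexV_def realV_def)
  then have "det (jacC A a z) \<noteq> 0" using ci by (simp add: complete_intersection_def)
  moreover have "jacC A a z = (\<chi> i j. complex_of_real (Jr A a x $i$j))"
    by (simp add: jacC_def Jr_def z_def matrix_vector_mult_def of_real_sum of_real_mult)
  ultimately show ?thesis by (simp add: det_of_real)
qed

lemma qf_bound: "\<bar>x \<bullet> (P *v x)\<bar> \<le> (\<Sum>p\<in>UNIV. \<Sum>q\<in>UNIV. \<bar>P$p$q\<bar>) * (norm x)^2"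
proof -
  have "\<bar>x \<bullet> (P *v x)\<bar> \<le> (\<Sum>p\<in>UNIV. \<bar>\<Sum>q\<in>UNIV. x$p * P$p$q * x$q\<bar>)"
    unfolding qf_expand by (rule sum_abs)
  also have "\<dots> \<le> (\<Sum>p\<in>UNIV. \<Sum>q\<in>UNIV. \<bar>x$p * P$p$q * x$q\<bar>)"
    by (intro sum_mono sum_abs)
  also have "\<dots> \<le> (\<Sum>p\<in>UNIV. \<Sum>q\<in>UNIV. \<bar>P$p$q\<bar> * (norm x)^2)"
  proof (intro sum_mono)
    fix p q
    have "\<bar>x$p\<bar> * \<bar>x$q\<bar> \<le> norm x * norm x"
      by (intro mult_mono component_le_norm_cart) auto
    then have "\<bar>P$p$q\<bar> * (\<bar>x$p\<bar> * \<bar>x$q\<bar>) \<le> \<bar>P$p$q\<bar> * (norm x * norm x)"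
      by (intro mult_left_mono) auto
    then show "\<bar>x$p * P$p$q * x$q\<bar> \<le> \<bar>P$p$q\<bar> * (norm x)^2"
      by (simp add: abs_mult power2_eq_square algebra_simps)
  qed
  also have "\<dots> = (\<Sum>p\<in>UNIV. \<Sum>q\<in>UNIV. \<bar>P$p$q\<bar>) * (norm x)^2"
    by (simp add: sum_distrib_right)
  finally show ?thesis .
qed

lemma Sed_ball: "\<exists>e>0. ball 0 e \<subseteq> Sed A"
proof -
  define K where "K = (\<Sum>p\<in>UNIV. \<Sum>q\<in>UNIV. \<Sum>i\<in>UNIV. \<bar>A i$p$q\<bar>)"
  have K0: "K \<ge> 0" unfolding K_def by (intro sum_nonneg) auto
  define e where "e = 1 / (K + 1)"
  have e0: "e > 0" using K0 by (simp add: e_def)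
  have "lam \<in> Sed A" if lam: "norm lam < e" for lam
  proof -
    have bnd: "(\<Sum>p\<in>UNIV. \<Sum>q\<in>UNIV. \<bar>lin_comb lam A $p$q\<bar>) \<le> norm lam * K"
    proof -
      have "(\<Sum>p\<in>UNIV. \<Sum>q\<in>UNIV. \<bar>lin_comb lam A $p$q\<bar>) \<le> (\<Sum>p\<in>UNIV. \<Sum>q\<in>UNIV. \<Sum>i\<in>UNIV. norm lam * \<bar>A i$p$q\<bar>)"
      proof (intro sum_mono)
        fix p q
        have "\<bar>lin_comb lam A $p$q\<bar> \<le> (\<Sum>i\<in>UNIV. \<bar>lam$i * A i$p$q\<bar>)"
          unfolding lin_comb_comp by (rule sum_abs)
        also have "\<dots> \<le> (\<Sum>i\<in>UNIV. norm lam * \<bar>A i$p$q\<bar>)"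
          by (intro sum_mono) (simp add: abs_mult mult_right_mono component_le_norm_cart)
        finally show "\<bar>lin_comb lam A $p$q\<bar> \<le> (\<Sum>i\<in>UNIV. norm lam * \<bar>A i$p$q\<bar>)" .
      qed
      also have "\<dots> = norm lam * K" by (simp add: K_def sum_distrib_left)
      finally show ?thesis .
    qed
    have nK: "norm lam * K < 1"
    proof -
      have "norm lam * K \<le> e * K" using lam K0 by (intro mult_right_mono) auto
      also have "e * K < 1" using K0 by (simp add: e_def field_simps)
      finally show ?thesis .
    qed
    show ?thesis unfolding Sed_def neg_definite_def
    proof (safe)
      fix v :: "real^'a" assume v: "v \<noteq> 0"
      have nv: "(norm v)^2 > 0" using v by simp
      have "v \<bullet> (lin_comb lam A *v v) \<le> (\<Sum>p\<in>UNIV. \<Sum>q\<in>UNIV. \<bar>lin_comb lam A $p$q\<bar>) * (norm v)^2"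
        using qf_bound[of v "lin_comb lam A"] by linarith
      also have "\<dots> \<le> (norm lam * K) * (norm v)^2" using bnd by (intro mult_right_mono) auto
      also have "\<dots> < 1 * (norm v)^2" using nK nv by (intro mult_strict_right_mono) auto
      finally have "v \<bullet> (lin_comb lam A *v v) < v \<bullet> v" by (simp add: power2_norm_eq_inner)
      then show "v \<bullet> ((lin_comb lam A - mat 1) *v v) < 0"
        by (simp add: matrix_vector_mult_diff_rdistrib inner_diff_right)
    qed
  qed
  then show ?thesis using e0 by (auto simp: dist_norm)
qed


lemma image_aff: fixes T B :: "real^'n^'n" assumes "T ** B = mat 1" "B ** T = mat 1"
  shows "(\<lambda>w. (- T) *v w + c) ` S = {u. B *v (c - u) \<in> S}"
proof safe
  fix w assume w: "w \<in> S"
  have "c - ((- T) *v w + c) = T *v w" by (simp add: neg_mv)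
  then have "B *v (c - ((- T) *v w + c)) = w" by (simp add: matrix_vector_mul_assoc assms)
  then show "B *v (c - ((- T) *v w + c)) \<in> S" using w by simp
next
  fix u assume "B *v (c - u) \<in> S"
  moreover have "(- T) *v (B *v (c - u)) = - (c - u)"
    using neg_mv[of T "B *v (c - u)"] by (simp add: matrix_vector_mul_assoc assms)
  then have "u = (- T) *v (B *v (c - u)) + c" by simp
  ultimately show "u \<in> (\<lambda>w. (- T) *v w + c) ` S" by blast
qed

lemma neg_mm: "(- T) ** (- B) = T ** (B::real^'n^'n)"
  by (simp add: matrix_matrix_mult_def vec_eq_iff sum_negf)

lemma transpose_diff': "transpose (X - Y) = transpose X - transpose (Y::real^'n^'n)"
  by (simp add: transpose_def vec_eq_iff)

lemma lin_comb_diff: "lin_comb (c - d) A = lin_comb c A - lin_comb d A"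
  using lin_comb_add[of c "- d" A] lin_comb_neg[of d A] by simp

theorem corollary4p3:
  fixes A :: "'n::finite \<Rightarrow> real^'n^'n" and a :: "'n \<Rightarrow> real^'n" and \<alpha> :: "'n \<Rightarrow> real"
    and k :: nat
  assumes sym: "\<forall>i. transpose (A i) = A i"
    and ci: "complete_intersection A a \<alpha>"
    and k: "finite (realV A a \<alpha>)" "card (realV A a \<alpha>) = k" "k \<le> 2 ^ CARD('n)"
  shows "(\<exists>L :: real^'n \<Rightarrow> real^'n \<Rightarrow> real^'n.
            (\<forall>x\<in>realV A a \<alpha>. linear (L x) \<and> bij (L x) \<and>
                spectrahedral_cone (L x ` Slin A)) \<and>
            disjoint_family_on (\<lambda>x. L x ` Slin A) (realV A a \<alpha>) \<and>
            Rlin A a \<alpha> = (\<Union>x\<in>realV A a \<alpha>. L x ` Slin A))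
       \<and> (\<exists>(M :: real^'n \<Rightarrow> real^'n \<Rightarrow> real^'n) (c :: real^'n \<Rightarrow> real^'n).
            (\<forall>x\<in>realV A a \<alpha>. linear (M x) \<and> bij (M x) \<and>
                spectrahedron ((\<lambda>w. M x w + c x) ` Sed A) \<and>
                interior ((\<lambda>w. M x w + c x) ` Sed A) \<noteq> {}) \<and>
            disjoint_family_on (\<lambda>x. (\<lambda>w. M x w + c x) ` Sed A) (realV A a \<alpha>) \<and>
            Red A a \<alpha> = (\<Union>x\<in>realV A a \<alpha>. (\<lambda>w. M x w + c x) ` Sed A))"
proof -
  define V where "V = realV A a \<alpha>"
  define T where "T x = transpose (Jr A a x)" for x
  define Bi where "Bi x = matrix_inv (T x)" for x
  have inv: "T x ** Bi x = mat 1 \<and> Bi x ** T x = mat 1" if "x \<in> V" for x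
    using det_Jr[OF ci, of x] that unfolding Bi_def T_def V_def
    by (intro matrix_inv_both) (simp add: invertible_det_nz)
  have Tmv: "T x *v lam = (\<Sum>i\<in>UNIV. lam$i *\<^sub>R (a i + A i *v x))" for x lam
    by (simp only: T_def Jr_mv)
  have Tneg: "(- T x) *v lam + x = x - (\<Sum>i\<in>UNIV. lam$i *\<^sub>R (a i + A i *v x))" for x lam
    by (simp add: neg_mv Tmv)
  have partA: "\<exists>L :: real^'n \<Rightarrow> real^'n \<Rightarrow> real^'n.
            (\<forall>x\<in>V. linear (L x) \<and> bij (L x) \<and> spectrahedral_cone (L x ` Slin A)) \<and>
            disjoint_family_on (\<lambda>x. L x ` Slin A) V \<and>
            Rlin A a \<alpha> = (\<Union>x\<in>V. L x ` Slin A)"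
  proof (intro exI[of _ "\<lambda>x w. T x *v w"] conjI ballI)
    fix x assume x: "x \<in> V"
    show "linear (\<lambda>w. T x *v w)" by simp
    show "bij (\<lambda>w. T x *v w)" using inv[OF x] bij_mv by blast
    have "(\<lambda>w. T x *v w) ` Slin A = {u. neg_definite ((\<lambda>u. lin_comb (Bi x *v u) A) u)}"
      using image_inv[of "T x" "Bi x" "Slin A"] inv[OF x] by (simp add: Slin_def)
    moreover have "spectrahedral_cone {u. neg_definite ((\<lambda>u. lin_comb (Bi x *v u) A) u)}"
    proof (rule cone_rep)
      show "linear (\<lambda>u. lin_comb (Bi x *v u) A)"
        using linear_compose[OF matrix_vector_mul_linear[of "Bi x"] linear_lin_comb[of A]]
        by (simp add: o_def)
      show "\<forall>u. transpose (lin_comb (Bi x *v u) A) = lin_comb (Bi x *v u) A"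
        using lin_comb_sym[OF sym] by blast
    qed
    ultimately show "spectrahedral_cone ((\<lambda>w. T x *v w) ` Slin A)" by simp
  next
    show "disjoint_family_on (\<lambda>x. (\<lambda>w. T x *v w) ` Slin A) V"
      unfolding disjoint_family_on_def
    proof (intro ballI impI)
      fix x y assume x: "x \<in> V" and y: "y \<in> V" and xy: "x \<noteq> y"
      show "(\<lambda>w. T x *v w) ` Slin A \<inter> (\<lambda>w. T y *v w) ` Slin A = {}"
      proof (rule ccontr)
        assume "(\<lambda>w. T x *v w) ` Slin A \<inter> (\<lambda>w. T y *v w) ` Slin A \<noteq> {}"
        then obtain lam mu where lam: "lam \<in> Slin A" and mu: "mu \<in> Slin A"
          and e: "T x *v lam = T y *v mu" by blast
        have "(T x *v lam) \<bullet> x < (T x *v lam) \<bullet> y"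
          unfolding Tmv using lin_strict[OF sym x[unfolded V_def] y[unfolded V_def] xy[symmetric] lam] .
        moreover have "(T y *v mu) \<bullet> y < (T y *v mu) \<bullet> x"
          unfolding Tmv using lin_strict[OF sym y[unfolded V_def] x[unfolded V_def] xy mu] .
        ultimately show False using e by simp
      qed
    qed
  next
    show "Rlin A a \<alpha> = (\<Union>x\<in>V. (\<lambda>w. T x *v w) ` Slin A)"
      unfolding Rlin_def V_def Tmv by blast
  qed
  have partB: "\<exists>(M :: real^'n \<Rightarrow> real^'n \<Rightarrow> real^'n) (c :: real^'n \<Rightarrow> real^'n).
            (\<forall>x\<in>V. linear (M x) \<and> bij (M x) \<and>
                spectrahedron ((\<lambda>w. M x w + c x) ` Sed A) \<and>
                interior ((\<lambda>w. M x w + c x) ` Sed A) \<noteq> {}) \<and>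
            disjoint_family_on (\<lambda>x. (\<lambda>w. M x w + c x) ` Sed A) V \<and>
            Red A a \<alpha> = (\<Union>x\<in>V. (\<lambda>w. M x w + c x) ` Sed A)"
  proof (intro exI[of _ "\<lambda>x w. (- T x) *v w"] exI[of _ "\<lambda>x. x"] conjI ballI)
    fix x assume x: "x \<in> V"
    show "linear (\<lambda>w. (- T x) *v w)" by simp
    show "bij (\<lambda>w. (- T x) *v w)" using inv[OF x] bij_mv[of "- T x" "- Bi x"] by (simp add: neg_mm)
    define P0 where "P0 = mat 1 - lin_comb (Bi x *v x) A"
    have img: "(\<lambda>w. (- T x) *v w + x) ` Sed A = {u. \<forall>v. v \<noteq> 0 \<longrightarrow> v \<bullet> ((P0 + (\<lambda>u. lin_comb (Bi x *v u) A) u) *v v) > 0}"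
    proof -
      have "(\<lambda>w. (- T x) *v w + x) ` Sed A = {u. Bi x *v (x - u) \<in> Sed A}"
        using image_aff[of "T x" "Bi x" x "Sed A"] inv[OF x] by simp
      also have "\<dots> = {u. \<forall>v. v \<noteq> 0 \<longrightarrow> v \<bullet> ((P0 + (\<lambda>u. lin_comb (Bi x *v u) A) u) *v v) > 0}"
      proof -
        have eq: "lin_comb (Bi x *v (x - u)) A - mat 1 = - (P0 + lin_comb (Bi x *v u) A)" for u
          by (simp add: P0_def matrix_vector_mult_diff_distrib lin_comb_diff)
        show ?thesis
          unfolding Sed_def neg_definite_def mem_Collect_eq eq neg_mv inner_minus_right by simp
      qed
      finally show ?thesis .
    qed
    have "spectrahedron {u. \<forall>v. v \<noteq> 0 \<longrightarrow> v \<bullet> ((P0 + (\<lambda>u. lin_comb (Bi x *v u) A) u) *v v) > 0}"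
    proof (rule spec_rep)
      show "linear (\<lambda>u. lin_comb (Bi x *v u) A)"
        using linear_compose[OF matrix_vector_mul_linear[of "Bi x"] linear_lin_comb[of A]]
        by (simp add: o_def)
      show "\<forall>u. transpose (lin_comb (Bi x *v u) A) = lin_comb (Bi x *v u) A"
        using lin_comb_sym[OF sym] by blast
      show "transpose P0 = P0"
        by (simp add: P0_def transpose_diff' lin_comb_sym[OF sym])
    qed
    then show "spectrahedron ((\<lambda>w. (- T x) *v w + x) ` Sed A)" using img by simp
    obtain e where e: "e > 0" "ball 0 e \<subseteq> Sed A" using Sed_ball by blast
    have lin: "linear (\<lambda>w. (- T x) *v w)" by simp
    have surj: "surj (\<lambda>w. (- T x) *v w)" using \<open>bij (\<lambda>w. (- T x) *v w)\<close> bij_is_surj by blast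
    have eqi: "(\<lambda>w. (- T x) *v w + x) ` ball 0 e = (\<lambda>v. x + v) ` ((\<lambda>w. (- T x) *v w) ` ball 0 e)"
      by (simp add: image_image add.commute)
    have op: "open ((\<lambda>w. (- T x) *v w + x) ` ball 0 e)"
      unfolding eqi by (intro open_translation open_surjective_linear_image[OF _ lin surj]) simp
    have "(\<lambda>w. (- T x) *v w + x) ` ball 0 e \<subseteq> interior ((\<lambda>w. (- T x) *v w + x) ` Sed A)"
      by (intro interior_maximal op image_mono e)
    moreover have "x \<in> (\<lambda>w. (- T x) *v w + x) ` ball 0 e"
      using e(1) by (intro image_eqI[of _ _ 0]) auto
    ultimately show "interior ((\<lambda>w. (- T x) *v w + x) ` Sed A) \<noteq> {}" by blast
  next
    show "disjoint_family_on (\<lambda>x. (\<lambda>w. (- T x) *v w + x) ` Sed A) V"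
      unfolding disjoint_family_on_def
    proof (intro ballI impI)
      fix x y assume x: "x \<in> V" and y: "y \<in> V" and xy: "x \<noteq> y"
      show "(\<lambda>w. (- T x) *v w + x) ` Sed A \<inter> (\<lambda>w. (- T y) *v w + y) ` Sed A = {}"
      proof (rule ccontr)
        assume "(\<lambda>w. (- T x) *v w + x) ` Sed A \<inter> (\<lambda>w. (- T y) *v w + y) ` Sed A \<noteq> {}"
        then obtain u lam mu where lam: "lam \<in> Sed A" and mu: "mu \<in> Sed A"
          and e1: "u = (- T x) *v lam + x" and e2: "u = (- T y) *v mu + y" by blast
        have "(x - u) \<bullet> (x - u) < (y - u) \<bullet> (y - u)"
          using ed_strict[OF sym x[unfolded V_def] y[unfolded V_def] xy[symmetric] lam] e1 Tneg by simp
        moreover have "(y - u) \<bullet> (y - u) < (x - u) \<bullet> (x - u)"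
          using ed_strict[OF sym y[unfolded V_def] x[unfolded V_def] xy mu] e2 Tneg by simp
        ultimately show False by simp
      qed
    qed
  next
    show "Red A a \<alpha> = (\<Union>x\<in>V. (\<lambda>w. (- T x) *v w + x) ` Sed A)"
      unfolding Red_def V_def Tneg by blast
  qed
  show ?thesis unfolding V_def[symmetric] by (rule conjI[OF partA partB])
qed

end
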